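(* If a partial coloring of an $n\times n$ square $A$ uniquely extends to $L(n,2n-2)$, then $A$ has no three uncolored entries in the same row, and no three uncolored entries in the same column.
   Context: For positive integers $n,k$, let $\mathcal{L}_{n,k}$ be the set of $n\times n$ squares all of whose entries are colored with colors from a fixed set of $k$ colors $\{1,\dots,k\}$ such that any two entries in the same row, or in the same column, have different colors. Entries are indexed $(i,j)$, $i$ the row and $j$ the column. A partial coloring of an $n\times n$ square assigns colors from $\{1,\dots,k\}$ to some of its entries; the remaining entries are called uncolored. A partial coloring extends to $L(n,k)$ if the uncolored entries can be colored so that the resulting fully colored square lies in $\mathcal{L}_{n,k}$ (keeping the given colors), and it uniquely extends to $L(n,k)$ if there is exactly one such way. *)

theory Defs
  imports Main
begin

definition in_L :: "nat \<Rightarrow> nat \<Rightarrow> (nat \<times> nat \<Rightarrow> nat) \<Rightarrow> bool" where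
  "in_L n k L \<longleftrightarrow>
     (\<forall>i<n. \<forall>j<n. L (i,j) \<in> {1..k}) \<and>
     (\<forall>i<n. \<forall>j<n. \<forall>j'<n. j \<noteq> j' \<longrightarrow> L (i,j) \<noteq> L (i,j')) \<and>
     (\<forall>i<n. \<forall>i'<n. \<forall>j<n. i \<noteq> i' \<longrightarrow> L (i,j) \<noteq> L (i',j))"

(* A partial coloring: None = uncolored, Some c = colored with c in {1..k}. *)
definition partial_coloring :: "nat \<Rightarrow> nat \<Rightarrow> (nat \<times> nat \<Rightarrow> nat option) \<Rightarrow> bool" where
  "partial_coloring n k A \<longleftrightarrow> (\<forall>i<n. \<forall>j<n. \<forall>c. A (i,j) = Some c \<longrightarrow> c \<in> {1..k})"

definition extension_of :: "nat \<Rightarrow> nat \<Rightarrow> (nat \<times> nat \<Rightarrow> nat option) \<Rightarrow> (nat \<times> nat \<Rightarrow> nat) \<Rightarrow> bool" where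
  "extension_of n k A L \<longleftrightarrow> in_L n k L \<and> (\<forall>i<n. \<forall>j<n. \<forall>c. A (i,j) = Some c \<longrightarrow> L (i,j) = c)"

(* Extensions are compared only on the square {0..<n} x {0..<n}. *)
definition uniquely_extends :: "nat \<Rightarrow> nat \<Rightarrow> (nat \<times> nat \<Rightarrow> nat option) \<Rightarrow> bool" where
  "uniquely_extends n k A \<longleftrightarrow>
     (\<exists>L. extension_of n k A L) \<and>
     (\<forall>L L'. extension_of n k A L \<longrightarrow> extension_of n k A L' \<longrightarrow>
        (\<forall>i<n. \<forall>j<n. L (i,j) = L' (i,j)))"

end

theory Submission
  imports Defs
begin

lemma sdr:
  assumes "a1\<noteq>a2" "a1\<noteq>a3" "a2\<noteq>a3" "b1\<noteq>a1" "b2\<noteq>a2" "b3\<noteq>a3"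
    "a1\<in>S1" "a2\<in>S2" "a3\<in>S3" "b1\<in>S1" "b2\<in>S2" "b3\<in>S3"
  shows "\<exists>x1\<in>S1. \<exists>x2\<in>S2. \<exists>x3\<in>S3. x1\<noteq>x2 \<and> x1\<noteq>x3 \<and> x2\<noteq>x3 \<and> (x1,x2,x3) \<noteq> (a1,a2,a3)"
  using assms by (metis prod.inject)

lemma free_color:
  fixes L :: "nat \<times> nat \<Rightarrow> nat"
  assumes L: "in_L n (2*n-2) L" and i: "i<n" and j: "j<n" and js: "j \<in> J" "J \<subseteq> {0..<n}" "card J = 3"
  shows "\<exists>b. b \<in> {1..2*n-2} \<and> b \<noteq> L(i,j) \<and> (\<forall>j'<n. j' \<notin> J \<longrightarrow> L(i,j') \<noteq> b)
        \<and> (\<forall>i'<n. i' \<noteq> i \<longrightarrow> L(i',j) \<noteq> b)"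
proof -
  define F where "F = L ` ((\<lambda>j'. (i,j')) ` ({0..<n} - J) \<union> (\<lambda>i'. (i',j)) ` ({0..<n} - {i}))"
  have fJ: "finite J" using js finite_subset by blast
  have c1: "card ((\<lambda>j'. (i,j')) ` ({0..<n} - J)) \<le> n - 3"
    using card_image_le[of "{0..<n} - J" "\<lambda>j'. (i,j')"] card_Diff_subset[OF fJ js(2)] js(3) by simp
  have c2: "card ((\<lambda>i'. (i',j)) ` ({0..<n} - {i})) \<le> n - 1"
    using card_image_le[of "{0..<n} - {i}" "\<lambda>i'. (i',j)"] i by simp
  have cF: "card (insert (L(i,j)) F) \<le> 2*n - 3"
  proof -
    have "card (insert (L(i,j)) F) \<le> card F + 1" by (simp add: card_insert_le_m1 F_def card_insert_if)
    moreover have "card F \<le> card ((\<lambda>j'. (i,j')) ` ({0..<n} - J) \<union> (\<lambda>i'. (i',j)) ` ({0..<n} - {i}))"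
      unfolding F_def by (rule card_image_le) simp
    moreover have "card ((\<lambda>j'. (i,j')) ` ({0..<n} - J) \<union> (\<lambda>i'. (i',j)) ` ({0..<n} - {i})) \<le> (n-3) + (n-1)"
      using card_Un_le c1 c2 by (meson add_mono le_trans)
    moreover have "n \<ge> 3" using js card_mono[OF _ js(2)] by (metis card_atLeastLessThan diff_zero finite_atLeastLessThan)
    ultimately show ?thesis by linarith
  qed
  have "\<not> {1..2*n-2} \<subseteq> insert (L(i,j)) F"
  proof
    assume "{1..2*n-2} \<subseteq> insert (L(i,j)) F"
    hence "card {1..2*n-2} \<le> card (insert (L(i,j)) F)" by (rule card_mono[rotated]) (simp add: F_def)
    with cF have "2*n-2 \<le> 2*n-3" by simp
    moreover have "n \<ge> 3" using js card_mono[OF _ js(2)] by (metis card_atLeastLessThan diff_zero finite_atLeastLessThan)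
    ultimately show False by linarith
  qed
  then obtain b where b: "b \<in> {1..2*n-2}" "b \<noteq> L(i,j)" "b \<notin> F" by blast
  show ?thesis
    apply (rule exI[of _ b])
    using b unfolding F_def by (auto simp: image_iff)
qed


lemma row_case:
  fixes A :: "nat \<times> nat \<Rightarrow> nat option"
  assumes U: "uniquely_extends n (2*n-2) A" and i: "i<n"
    and j: "j1<n" "j2<n" "j3<n" "j1\<noteq>j2" "j1\<noteq>j3" "j2\<noteq>j3"
    and N: "A (i,j1) = None" "A (i,j2) = None" "A (i,j3) = None"
  shows False
proof -
  obtain L where EL: "extension_of n (2*n-2) A L" using U unfolding uniquely_extends_def by blast
  hence L: "in_L n (2*n-2) L" unfolding extension_of_def by blast
  define J where "J = {j1,j2,j3}"
  have Jp: "J \<subseteq> {0..<n}" "card J = 3" using j unfolding J_def by auto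
  obtain b1 where b1: "b1 \<in> {1..2*n-2}" "b1 \<noteq> L(i,j1)" "\<forall>j'<n. j' \<notin> J \<longrightarrow> L(i,j') \<noteq> b1"
        "\<forall>i'<n. i' \<noteq> i \<longrightarrow> L(i',j1) \<noteq> b1"
    using free_color[OF L i j(1) _ Jp] unfolding J_def by auto
  obtain b2 where b2: "b2 \<in> {1..2*n-2}" "b2 \<noteq> L(i,j2)" "\<forall>j'<n. j' \<notin> J \<longrightarrow> L(i,j') \<noteq> b2"
        "\<forall>i'<n. i' \<noteq> i \<longrightarrow> L(i',j2) \<noteq> b2"
    using free_color[OF L i j(2) _ Jp] unfolding J_def by auto
  obtain b3 where b3: "b3 \<in> {1..2*n-2}" "b3 \<noteq> L(i,j3)" "\<forall>j'<n. j' \<notin> J \<longrightarrow> L(i,j') \<noteq> b3"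
        "\<forall>i'<n. i' \<noteq> i \<longrightarrow> L(i',j3) \<noteq> b3"
    using free_color[OF L i j(3) _ Jp] unfolding J_def by auto
  define S where "S = (\<lambda>jj. {c. c \<in> {1..2*n-2} \<and> (\<forall>j'<n. j' \<notin> J \<longrightarrow> L(i,j') \<noteq> c)
        \<and> (\<forall>i'<n. i' \<noteq> i \<longrightarrow> L(i',jj) \<noteq> c)})"
  have a: "L(i,j1) \<in> S j1" "L(i,j2) \<in> S j2" "L(i,j3) \<in> S j3"
    using L i j unfolding S_def in_L_def J_def by auto
  have ad: "L(i,j1) \<noteq> L(i,j2)" "L(i,j1) \<noteq> L(i,j3)" "L(i,j2) \<noteq> L(i,j3)"
    using L i j unfolding in_L_def by auto
  have bS: "b1 \<in> S j1" "b2 \<in> S j2" "b3 \<in> S j3" using b1 b2 b3 unfolding S_def by auto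
  obtain x1 x2 x3 where x: "x1 \<in> S j1" "x2 \<in> S j2" "x3 \<in> S j3" "x1\<noteq>x2" "x1\<noteq>x3" "x2\<noteq>x3"
     "(x1,x2,x3) \<noteq> (L(i,j1),L(i,j2),L(i,j3))"
    using sdr[OF ad b1(2) b2(2) b3(2) a bS] by blast
  define X where "X = (\<lambda>jj. if jj=j1 then x1 else if jj=j2 then x2 else x3)"
  define L' where "L' = (\<lambda>(a,b). if a=i \<and> b\<in>J then X b else L(a,b))"
  have XS: "X jj \<in> S jj" if "jj \<in> J" for jj using that x(1-3) unfolding X_def J_def by auto
  have Xd: "X jj \<noteq> X jj'" if "jj \<in> J" "jj' \<in> J" "jj \<noteq> jj'" for jj jj'
    using that x(4-6) unfolding X_def J_def by auto
  have R: "\<forall>i<n. \<forall>j<n. L (i,j) \<in> {1..2*n-2}" and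
       Rr: "\<forall>i<n. \<forall>j<n. \<forall>j'<n. j \<noteq> j' \<longrightarrow> L (i,j) \<noteq> L (i,j')" and
       Rc: "\<forall>i<n. \<forall>i'<n. \<forall>j<n. i \<noteq> i' \<longrightarrow> L (i,j) \<noteq> L (i',j)" using L unfolding in_L_def by auto
  have "in_L n (2*n-2) L'"
    unfolding in_L_def
  proof (intro conjI allI impI)
    fix a b assume "a<n" "b<n" thus "L'(a,b) \<in> {1..2*n-2}"
      using R XS unfolding L'_def S_def by auto
  next
    fix a b b' assume h: "a<n" "b<n" "b'<n" "b\<noteq>b'"
    show "L'(a,b) \<noteq> L'(a,b')"
    proof (cases "a=i")
      case True
      then show ?thesis
      proof (cases "b \<in> J"; cases "b' \<in> J")
        assume "b\<in>J" "b'\<in>J" thus ?thesis using True Xd h unfolding L'_def by simp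
      next
        assume "b\<in>J" "b'\<notin>J" thus ?thesis using True XS[of b] h unfolding L'_def S_def by auto
      next
        assume "b\<notin>J" "b'\<in>J" thus ?thesis using True XS[of b'] h unfolding L'_def S_def by auto
      next
        assume "b\<notin>J" "b'\<notin>J" thus ?thesis using True Rr h i unfolding L'_def by auto
      qed
    next
      case False thus ?thesis using Rr h unfolding L'_def by auto
    qed
  next
    fix a a' b assume h: "a<n" "a'<n" "b<n" "a\<noteq>a'"
    show "L'(a,b) \<noteq> L'(a',b)"
    proof (cases "b \<in> J")
      case True
      then show ?thesis
      proof (cases "a = i"; cases "a' = i")
        assume "a=i" "a'\<noteq>i" thus ?thesis using True XS[of b] h unfolding L'_def S_def by auto
      next
        assume "a\<noteq>i" "a'=i" thus ?thesis using True XS[of b] h unfolding L'_def S_def by auto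
      next
        assume "a\<noteq>i" "a'\<noteq>i" thus ?thesis using Rc h unfolding L'_def by auto
      next
        assume "a=i" "a'=i" thus ?thesis using h by simp
      qed
    next
      case False thus ?thesis using Rc h unfolding L'_def by auto
    qed
  qed
  hence EL': "extension_of n (2*n-2) A L'"
    using EL N unfolding extension_of_def L'_def J_def by auto
  have "\<forall>ii<n. \<forall>jj<n. L(ii,jj) = L'(ii,jj)" using U EL EL' unfolding uniquely_extends_def by blast
  hence E: "L(i,jj) = L'(i,jj)" if "jj<n" for jj using i that by blast
  have "L(i,j1) = x1" using E[of j1] j unfolding L'_def X_def J_def by simp
  moreover have "L(i,j2) = x2" using E[of j2] j unfolding L'_def X_def J_def by simp
  moreover have "L(i,j3) = x3" using E[of j3] j unfolding L'_def X_def J_def by simp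
  ultimately
  show False using x(7) by simp
qed

lemma inL_swap: "in_L n k (\<lambda>(i,j). L (j,i)) = in_L n k L"
    unfolding in_L_def by simp meson

lemma transpose_ue:
  assumes U: "uniquely_extends n k A"
  shows "uniquely_extends n k (\<lambda>(i,j). A (j,i))"
proof -
  define T :: "(nat\<times>nat\<Rightarrow>nat) \<Rightarrow> (nat\<times>nat\<Rightarrow>nat)" where "T = (\<lambda>L (i,j). L (j,i))"
  have TT: "T (T L) = L" for L unfolding T_def by (auto simp: fun_eq_iff)
  have inL: "in_L n k (T L) = in_L n k L" for L
    unfolding T_def by (rule inL_swap)
  have ex: "extension_of n k (\<lambda>(i,j). A (j,i)) L = extension_of n k A (T L)" for L
    unfolding extension_of_def inL unfolding T_def by simp meson
  obtain L0 where L0: "extension_of n k A L0" using U unfolding uniquely_extends_def by blast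
  have "extension_of n k (\<lambda>(i,j). A (j,i)) (T L0)" unfolding ex TT by (rule L0)
  moreover have "\<forall>i<n. \<forall>j<n. L (i,j) = L' (i,j)"
    if "extension_of n k (\<lambda>(i,j). A (j,i)) L" "extension_of n k (\<lambda>(i,j). A (j,i)) L'" for L L'
  proof (intro allI impI)
    fix i j assume "i<n" "j<n"
    have "\<forall>i<n. \<forall>j<n. T L (i,j) = T L' (i,j)" using U that unfolding ex uniquely_extends_def by blast
    hence "T L (j,i) = T L' (j,i)" using \<open>i<n\<close> \<open>j<n\<close> by blast
    thus "L (i,j) = L' (i,j)" unfolding T_def by simp
  qed
  ultimately show ?thesis unfolding uniquely_extends_def by blast
qed

theorem lemma1:
  fixes n :: nat and A :: "nat \<times> nat \<Rightarrow> nat option"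
  assumes "n \<ge> 1"
    and "partial_coloring n (2*n-2) A"
    and "uniquely_extends n (2*n-2) A"
  shows "(\<forall>i<n. \<not> (\<exists>j1 j2 j3. j1 < n \<and> j2 < n \<and> j3 < n \<and> j1 \<noteq> j2 \<and> j1 \<noteq> j3 \<and> j2 \<noteq> j3 \<and>
                 A (i,j1) = None \<and> A (i,j2) = None \<and> A (i,j3) = None)) \<and>
         (\<forall>j<n. \<not> (\<exists>i1 i2 i3. i1 < n \<and> i2 < n \<and> i3 < n \<and> i1 \<noteq> i2 \<and> i1 \<noteq> i3 \<and> i2 \<noteq> i3 \<and>
                 A (i1,j) = None \<and> A (i2,j) = None \<and> A (i3,j) = None))"
proof (intro conjI allI impI notI)
  fix i assume "i<n" "\<exists>j1 j2 j3. j1 < n \<and> j2 < n \<and> j3 < n \<and> j1 \<noteq> j2 \<and> j1 \<noteq> j3 \<and> j2 \<noteq> j3 \<and>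
                 A (i,j1) = None \<and> A (i,j2) = None \<and> A (i,j3) = None"
  then show False using row_case[OF assms(3)] by blast
next
  fix j assume "j<n" "\<exists>i1 i2 i3. i1 < n \<and> i2 < n \<and> i3 < n \<and> i1 \<noteq> i2 \<and> i1 \<noteq> i3 \<and> i2 \<noteq> i3 \<and>
                 A (i1,j) = None \<and> A (i2,j) = None \<and> A (i3,j) = None"
  then show False using row_case[OF transpose_ue[OF assms(3)], of j] by auto
qed

end
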